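(* Let $k\ge1$ and let $s_1,s_2\ge0$ be integers with $s_1+s_2\le k$. The determinant of the Gram matrix $G^k_{2s_1+s_2}$ (defined in the context) is a nonzero polynomial in $\mathbb{Z}[x]$ with leading coefficient $1$.
   Context: Let $\mathbb{Z}_2=\{e,g\}$ act on $X=([k]\cup[k'])\times\mathbb{Z}_2$ by $h\cdot(i,a)=(i,ha)$, where $[k]=\{1,\dots,k\}$, $[k']=\{1',\dots,k'\}$. A set partition of a $\mathbb{Z}_2$-stable set is $\mathbb{Z}_2$-stable if $g$ maps blocks to blocks. Identifying $(i,e)\mapsto 2i-1$, $(i,g)\mapsto 2i$ (and similarly for primed vertices), a $\mathbb{Z}_2$-stable set partition of $X$ is a $2k$-partition diagram (top row $[k]\times\mathbb{Z}_2$, bottom row $[k']\times\mathbb{Z}_2$). For partition diagrams: a block meeting both rows is a through class, the propagating number $\sharp^p(d)$ is the number of through classes; the product of $d_1,d_2$ is obtained by placing $d_1$ above $d_2$, identifying bottom vertices of $d_1$ with top vertices of $d_2$, taking the induced partition $d_3$ of the outer rows, and $l(d_1,d_2)$ is the number of connected components lying entirely in the middle row; $\sharp^p(d_1d_2)$ means $\sharp^p(d_3)$. Index set: a block $B$ of a $\mathbb{Z}_2$-stable partition $\pi$ of $[k]\times\mathbb{Z}_2$ is a $\mathbb{Z}_2$-block if $gB=B$ and an $\{e\}$-block otherwise (then $gB\neq B$ is also a block). $J^{2k}_{2s_1+s_2}$ is the set of pairs $D=(\pi,T)$ with $\pi$ a $\mathbb{Z}_2$-stable partition of $[k]\times\mathbb{Z}_2$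 and $T$ a $g$-stable set of blocks of $\pi$ consisting of $s_1$ pairs $\{B,gB\}$ of $\{e\}$-blocks and $s_2$ $\mathbb{Z}_2$-blocks. The diagram $d_D$ has blocks $B\cup B'$ for $B\in T$, and $B$, $B'$ separately for $B\in\pi\setminus T$, where $B'=\{(i',a):(i,a)\in B\}$. The Gram matrix $G^k_{2s_1+s_2}$ has rows and columns indexed by $J^{2k}_{2s_1+s_2}$, with $(D,E)$ entry $x^{l(d_D,d_E)}$ if $\sharp^p(d_Dd_E)=2s_1+s_2$ and $0$ otherwise. *)

theory Defs
  imports "HOL-Combinatorics.Permutations" "HOL-Computational_Algebra.Polynomial"
          "HOL-Library.Disjoint_Sets"
begin

text \<open>Z2 = {e,g} is modelled by bool: False = e, True = g; g acts by negation.
  A vertex of a partition diagram is (r, i, a) with r = False for the top row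
  ([k] x Z2) and r = True for the bottom row ([k'] x Z2).\<close>

type_synonym vtx = "nat \<times> bool"
type_synonym dvtx = "bool \<times> nat \<times> bool"

definition gact :: "vtx \<Rightarrow> vtx" where
  "gact v = (fst v, \<not> snd v)"

definition base :: "nat \<Rightarrow> vtx set" where
  "base k = {1..k} \<times> UNIV"

definition Z2_stable_partition :: "nat \<Rightarrow> vtx set set \<Rightarrow> bool" where
  "Z2_stable_partition k \<pi> \<longleftrightarrow> partition_on (base k) \<pi> \<and> (\<forall>B\<in>\<pi>. gact ` B \<in> \<pi>)"

definition Jset :: "nat \<Rightarrow> nat \<Rightarrow> nat \<Rightarrow> (vtx set set \<times> vtx set set) set" where
  "Jset k s1 s2 = {(\<pi>, T). Z2_stable_partition k \<pi> \<and> T \<subseteq> \<pi> \<and> (\<forall>B\<in>T. gact ` B \<in> T)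
      \<and> card {{B, gact ` B} | B. B \<in> T \<and> gact ` B \<noteq> B} = s1
      \<and> card {B \<in> T. gact ` B = B} = s2}"

definition top_copy :: "vtx set \<Rightarrow> dvtx set" where
  "top_copy B = (\<lambda>v. (False, v)) ` B"

definition bot_copy :: "vtx set \<Rightarrow> dvtx set" where
  "bot_copy B = (\<lambda>v. (True, v)) ` B"

definition diag :: "vtx set set \<times> vtx set set \<Rightarrow> dvtx set set" where
  "diag D = (case D of (\<pi>, T) \<Rightarrow>
     {top_copy B \<union> bot_copy B | B. B \<in> T} \<union> {top_copy B | B. B \<in> \<pi> - T}
     \<union> {bot_copy B | B. B \<in> \<pi> - T})"

definition prop_num :: "dvtx set set \<Rightarrow> nat" where
  "prop_num d = card {B \<in> d. (\<exists>v. (False, v) \<in> B) \<and> (\<exists>v. (True, v) \<in> B)}"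

text \<open>Stacking d1 above d2: three layers 0 (top of d1), 1 (middle), 2 (bottom of d2).\<close>
definition lay1 :: "dvtx \<Rightarrow> nat \<times> vtx" where
  "lay1 x = (if fst x then 1 else 0, snd x)"

definition lay2 :: "dvtx \<Rightarrow> nat \<times> vtx" where
  "lay2 x = (if fst x then 2 else 1, snd x)"

definition stack_rel :: "dvtx set set \<Rightarrow> dvtx set set \<Rightarrow> ((nat \<times> vtx) \<times> (nat \<times> vtx)) set" where
  "stack_rel d1 d2 = {(x, y). (\<exists>B\<in>d1. x \<in> lay1 ` B \<and> y \<in> lay1 ` B)
                          \<or> (\<exists>B\<in>d2. x \<in> lay2 ` B \<and> y \<in> lay2 ` B)}"

definition stack_comps :: "dvtx set set \<Rightarrow> dvtx set set \<Rightarrow> (nat \<times> vtx) set set" where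
  "stack_comps d1 d2 = (\<Union>(((`) lay1) ` d1) \<union> \<Union>(((`) lay2) ` d2)) // ((stack_rel d1 d2)\<^sup>*)"

definition unlay :: "nat \<times> vtx \<Rightarrow> dvtx" where
  "unlay x = (fst x = 2, snd x)"

definition diag_prod :: "dvtx set set \<Rightarrow> dvtx set set \<Rightarrow> dvtx set set" where
  "diag_prod d1 d2 = {unlay ` (C \<inter> {c. fst c \<noteq> 1}) | C. C \<in> stack_comps d1 d2 \<and> (\<exists>c\<in>C. fst c \<noteq> 1)}"

definition lmid :: "dvtx set set \<Rightarrow> dvtx set set \<Rightarrow> nat" where
  "lmid d1 d2 = card {C \<in> stack_comps d1 d2. \<forall>c\<in>C. fst c = 1}"

definition gram_entry :: "nat \<Rightarrow> nat \<Rightarrow> (vtx set set \<times> vtx set set) \<Rightarrow> (vtx set set \<times> vtx set set) \<Rightarrow> int poly" where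
  "gram_entry s1 s2 D E =
     (if prop_num (diag_prod (diag D) (diag E)) = 2 * s1 + s2
      then monom 1 (lmid (diag D) (diag E)) else 0)"

definition det_on :: "'i set \<Rightarrow> ('i \<Rightarrow> 'i \<Rightarrow> 'a::comm_ring_1) \<Rightarrow> 'a" where
  "det_on I M = (\<Sum>p \<in> {p. p permutes I}. of_int (sign p) * (\<Prod>i\<in>I. M i (p i)))"

definition gram_det :: "nat \<Rightarrow> nat \<Rightarrow> nat \<Rightarrow> int poly" where
  "gram_det k s1 s2 = det_on (Jset k s1 s2) (gram_entry s1 s2)"

end

theory Submission
  imports Defs
begin


lemma part_uniq: "partition_on A P \<Longrightarrow> B \<in> P \<Longrightarrow> B' \<in> P \<Longrightarrow> v \<in> B \<Longrightarrow> v \<in> B' \<Longrightarrow> B = B'"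
  unfolding partition_on_def disjoint_def by blast

lemma part_cover: "partition_on A P \<Longrightarrow> v \<in> A \<Longrightarrow> \<exists>B\<in>P. v \<in> B"
  unfolding partition_on_def by blast

lemma part_sub: "partition_on A P \<Longrightarrow> B \<in> P \<Longrightarrow> B \<subseteq> A"
  unfolding partition_on_def by blast

lemma part_ne: "partition_on A P \<Longrightarrow> B \<in> P \<Longrightarrow> B \<noteq> {}"
  unfolding partition_on_def by blast

lemma diag_bex: "(\<exists>X\<in>diag (p, t). P X) \<longleftrightarrow> (\<exists>B\<in>t. P (top_copy B \<union> bot_copy B))
   \<or> (\<exists>B\<in>p - t. P (top_copy B)) \<or> (\<exists>B\<in>p - t. P (bot_copy B))"
  unfolding diag_def by blast

lemma mem_pimg: "x \<in> (\<lambda>v. (n, v)) ` B \<longleftrightarrow> fst x = n \<and> snd x \<in> B"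
  by (cases x) auto

lemma lay_imgs:
  "lay1 ` top_copy B = (\<lambda>v. (0, v)) ` B" "lay1 ` bot_copy B = (\<lambda>v. (1, v)) ` B"
  "lay2 ` top_copy B = (\<lambda>v. (1, v)) ` B" "lay2 ` bot_copy B = (\<lambda>v. (2, v)) ` B"
  unfolding top_copy_def bot_copy_def image_image lay1_def lay2_def by simp_all

lemma half1: "(\<exists>X\<in>diag (p, t). x \<in> lay1 ` X \<and> y \<in> lay1 ` X) \<longleftrightarrow>
    (\<exists>B\<in>t. fst x \<in> {0,1} \<and> fst y \<in> {0,1} \<and> snd x \<in> B \<and> snd y \<in> B)
  \<or> (\<exists>B\<in>p - t. (fst x = 0 \<and> fst y = 0 \<or> fst x = 1 \<and> fst y = 1) \<and> snd x \<in> B \<and> snd y \<in> B)"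
  unfolding diag_bex image_Un lay_imgs Un_iff mem_pimg insert_iff empty_iff
  by blast

lemma half2: "(\<exists>X\<in>diag (p, t). x \<in> lay2 ` X \<and> y \<in> lay2 ` X) \<longleftrightarrow>
    (\<exists>B\<in>t. fst x \<in> {1,2} \<and> fst y \<in> {1,2} \<and> snd x \<in> B \<and> snd y \<in> B)
  \<or> (\<exists>B\<in>p - t. (fst x = 1 \<and> fst y = 1 \<or> fst x = 2 \<and> fst y = 2) \<and> snd x \<in> B \<and> snd y \<in> B)"
  unfolding diag_bex image_Un lay_imgs Un_iff mem_pimg insert_iff empty_iff
  by blast

lemma stack_rel_diag:
  "(x, y) \<in> stack_rel (diag (p1, t1)) (diag (p2, t2)) \<longleftrightarrow>
    (\<exists>B\<in>t1. fst x \<in> {0,1} \<and> fst y \<in> {0,1} \<and> snd x \<in> B \<and> snd y \<in> B)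
  \<or> (\<exists>B\<in>p1 - t1. (fst x = 0 \<and> fst y = 0 \<or> fst x = 1 \<and> fst y = 1) \<and> snd x \<in> B \<and> snd y \<in> B)
  \<or> (\<exists>B\<in>t2. fst x \<in> {1,2} \<and> fst y \<in> {1,2} \<and> snd x \<in> B \<and> snd y \<in> B)
  \<or> (\<exists>B\<in>p2 - t2. (fst x = 1 \<and> fst y = 1 \<or> fst x = 2 \<and> fst y = 2) \<and> snd x \<in> B \<and> snd y \<in> B)"
  unfolding stack_rel_def mem_Collect_eq case_prod_conv half1 half2 by (rule disj_assoc)

lemma card_lemma:
  assumes "finite A" "P \<subseteq> g ` A" "card A \<le> card P"
  shows "P = g ` A \<and> inj_on g A"
proof -
  have f: "finite (g ` A)" using assms(1) by simp
  have "card P \<le> card (g ` A)" using card_mono[OF f assms(2)] .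
  moreover have "card (g ` A) \<le> card A" using card_image_le[OF assms(1)] .
  ultimately have e: "card (g ` A) = card A" "card P = card (g ` A)" using assms(3) by linarith+
  show ?thesis using eq_card_imp_inj_on[OF assms(1) e(1)] card_subset_eq[OF f assms(2) e(2)] by simp
qed

lemma blocks_sub:
  assumes P1: "partition_on A q1" and P2: "partition_on A q2" and S: "S1 \<subseteq> q1" "S2 \<subseteq> q2"
    and i1: "inj_on g S1" and i2: "inj_on g S2"
    and G1: "\<And>B w. B \<in> S1 \<Longrightarrow> w \<in> B \<Longrightarrow> G w = g B"
    and G2: "\<And>B w. B \<in> S2 \<Longrightarrow> w \<in> B \<Longrightarrow> G w = g B"
    and X1: "\<And>B B' w. B \<in> S1 \<Longrightarrow> w \<in> B \<Longrightarrow> B' \<in> q2 \<Longrightarrow> w \<in> B' \<Longrightarrow> B' \<in> S2"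
    and X2: "\<And>B B' w. B \<in> S2 \<Longrightarrow> w \<in> B \<Longrightarrow> B' \<in> q1 \<Longrightarrow> w \<in> B' \<Longrightarrow> B' \<in> S1"
  shows "S1 \<subseteq> S2"
proof
  fix B assume B: "B \<in> S1"
  then have Bq: "B \<in> q1" using S by blast
  obtain v where v: "v \<in> B" using part_ne[OF P1 Bq] by blast
  have vA: "v \<in> A" using part_sub[OF P1 Bq] v by blast
  obtain B2 where B2: "B2 \<in> q2" "v \<in> B2" using part_cover[OF P2 vA] by blast
  have B2S: "B2 \<in> S2" using X1[OF B v B2] .
  have "B = B2"
  proof
    show "B \<subseteq> B2"
    proof
      fix w assume w: "w \<in> B"
      have wA: "w \<in> A" using part_sub[OF P1 Bq] w by blast
      obtain B' where B': "B' \<in> q2" "w \<in> B'" using part_cover[OF P2 wA] by blast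
      have B'S: "B' \<in> S2" using X1[OF B w B'] .
      have "g B' = g B2" using G2[OF B'S B'(2)] G1[OF B w] G1[OF B v] G2[OF B2S B2(2)] by simp
      then have "B' = B2" using i2 B'S B2S inj_onD by metis
      then show "w \<in> B2" using B' by simp
    qed
  next
    show "B2 \<subseteq> B"
    proof
      fix w assume w: "w \<in> B2"
      have wA: "w \<in> A" using part_sub[OF P2 B2(1)] w by blast
      obtain B' where B': "B' \<in> q1" "w \<in> B'" using part_cover[OF P1 wA] by blast
      have B'S: "B' \<in> S1" using X2[OF B2S w B'] .
      have "g B' = g B" using G1[OF B'S B'(2)] G2[OF B2S w] G1[OF B v] G2[OF B2S B2(2)] by simp
      then have "B' = B" using i1 B'S B inj_onD by metis
      then show "w \<in> B" using B' by simp
    qed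
  qed
  then show "B \<in> S2" using B2S by simp
qed

locale two =
  fixes k :: nat and p1 t1 p2 t2 :: "vtx set set"
  assumes P1: "partition_on (base k) p1" and P2: "partition_on (base k) p2"
    and T1: "t1 \<subseteq> p1" and T2: "t2 \<subseteq> p2"
begin

abbreviation "R \<equiv> stack_rel (diag (p1, t1)) (diag (p2, t2))"
abbreviation "U \<equiv> \<Union>(((`) lay1) ` diag (p1, t1)) \<union> \<Union>(((`) lay2) ` diag (p2, t2))"
abbreviation "comps \<equiv> stack_comps (diag (p1, t1)) (diag (p2, t2))"
definition "cl x = R\<^sup>* `` {x}"
definition "gb B = cl (1, SOME v. v \<in> B)"
definition "Pm = {C \<in> comps. \<forall>c\<in>C. fst c = 1}"
definition "Th = {C \<in> comps. (\<exists>c\<in>C. fst c = 0) \<and> (\<exists>c\<in>C. fst c = 2)}"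

lemma U_R: "x \<in> U \<longleftrightarrow> (x, x) \<in> R"
  unfolding stack_rel_def by blast

lemma R_U: "(x, y) \<in> R \<Longrightarrow> y \<in> U"
  unfolding stack_rel_def by blast

lemma U_iff: "x \<in> U \<longleftrightarrow> fst x \<le> 2 \<and> snd x \<in> base k"
proof
  assume "x \<in> U"
  then have "(x, x) \<in> R" using U_R by blast
  then show "fst x \<le> 2 \<and> snd x \<in> base k" unfolding stack_rel_diag
    using part_sub[OF P1] part_sub[OF P2] T1 T2 by fastforce
next
  assume a: "fst x \<le> 2 \<and> snd x \<in> base k"
  obtain B where B: "B \<in> p1" "snd x \<in> B" using part_cover[OF P1] a by blast
  obtain C where C: "C \<in> p2" "snd x \<in> C" using part_cover[OF P2] a by blast
  have "fst x = 0 \<or> fst x = 1 \<or> fst x = 2" using a by auto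
  then have "(x, x) \<in> R" unfolding stack_rel_diag using B C by (cases "B \<in> t1"; cases "C \<in> t2") auto
  then show "x \<in> U" using U_R by blast
qed

lemma comps_eq: "comps = cl ` U"
  unfolding stack_comps_def quotient_def cl_def by (simp only: UNION_singleton_eq_range)

lemma symR: "sym R"
  unfolding sym_def stack_rel_def by blast

lemma eqv: "equiv UNIV (R\<^sup>*)"
  by (rule equivI) (auto simp: refl_on_def sym_rtrancl[OF symR] trans_rtrancl)

lemma cl_eq: "cl x = cl y \<longleftrightarrow> (x, y) \<in> R\<^sup>*"
  using equiv_class_eq_iff[OF eqv] unfolding cl_def by blast

lemma mem_cl: "y \<in> cl x \<longleftrightarrow> (x, y) \<in> R\<^sup>*"
  unfolding cl_def by blast

lemma closed:
  assumes "\<And>x y. (x, y) \<in> R \<Longrightarrow> x \<in> S \<Longrightarrow> y \<in> S" "x \<in> S"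
  shows "cl x \<subseteq> S"
proof
  fix y assume "y \<in> cl x"
  then have "(x, y) \<in> R\<^sup>*" using mem_cl by blast
  then show "y \<in> S"
  proof (induction rule: rtrancl_induct)
    case base show ?case using assms(2) .
  next
    case (step y z) then show ?case using assms(1) by blast
  qed
qed

lemma cl_sub_U: "x \<in> U \<Longrightarrow> cl x \<subseteq> U"
  apply (rule closed) apply (erule R_U) apply assumption done

lemma finite_base: "finite (base k)"
  unfolding base_def by simp

lemma finite_U: "finite U"
proof -
  have "U \<subseteq> {..2::nat} \<times> base k"
  proof
    fix x assume "x \<in> U"
    then have "fst x \<le> 2 \<and> snd x \<in> base k" by (simp only: U_iff)
    then show "x \<in> {..2::nat} \<times> base k" by (cases x) auto
  qed
  moreover have "finite ({..2::nat} \<times> base k)" using finite_base by simp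
  ultimately show ?thesis by (rule finite_subset)
qed

lemma finite_comps: "finite comps"
  unfolding comps_eq by (rule finite_imageI[OF finite_U])

lemma comp_obtain: "C \<in> comps \<Longrightarrow> (\<And>x. C = cl x \<Longrightarrow> x \<in> U \<Longrightarrow> P) \<Longrightarrow> P"
  unfolding comps_eq by (rule imageE)

lemma comp_cl: "C \<in> comps \<Longrightarrow> c \<in> C \<Longrightarrow> C = cl c"
proof -
  assume "C \<in> comps" "c \<in> C"
  obtain x where "C = cl x" using \<open>C \<in> comps\<close> by (rule comp_obtain)
  then show "C = cl c" using \<open>c \<in> C\<close> cl_eq mem_cl by blast
qed

lemma comp_U: "C \<in> comps \<Longrightarrow> C \<subseteq> U"
  unfolding comps_eq apply (erule imageE) apply hypsubst apply (erule cl_sub_U) done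

lemma cl_refl: "x \<in> cl x"
  using mem_cl by blast

lemma r_t1: "B \<in> t1 \<Longrightarrow> v \<in> B \<Longrightarrow> ((1, v), (0, v)) \<in> R"
  by (subst stack_rel_diag, rule disjI1, rule bexI[of _ B]) simp_all
lemma r_t2: "B \<in> t2 \<Longrightarrow> v \<in> B \<Longrightarrow> ((1, v), (2, v)) \<in> R"
  by (subst stack_rel_diag, rule disjI2, rule disjI2, rule disjI1, rule bexI[of _ B]) simp_all
lemma r_p1: "B \<in> p1 \<Longrightarrow> v \<in> B \<Longrightarrow> w \<in> B \<Longrightarrow> ((1, v), (1, w)) \<in> R"
  apply (subst stack_rel_diag) apply (cases "B \<in> t1")
   apply (rule disjI1, rule bexI[of _ B]) apply simp_all
  apply (rule disjI2, rule disjI1, rule bexI[of _ B]) apply simp_all done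
lemma r_p2: "B \<in> p2 \<Longrightarrow> v \<in> B \<Longrightarrow> w \<in> B \<Longrightarrow> ((1, v), (1, w)) \<in> R"
  apply (subst stack_rel_diag) apply (cases "B \<in> t2")
   apply (rule disjI2, rule disjI2, rule disjI1, rule bexI[of _ B]) apply simp_all
  apply (rule disjI2, rule disjI2, rule disjI2, rule bexI[of _ B]) apply simp_all done

lemma gb_eq1: assumes "B \<in> p1" "w \<in> B" shows "gb B = cl (1, w)"
proof -
  have "(SOME v. v \<in> B) \<in> B" using assms(2) by (rule someI)
  then show ?thesis unfolding gb_def cl_eq using r_p1[OF assms(1)] assms(2) by blast
qed
lemma gb_eq2: assumes "B \<in> p2" "w \<in> B" shows "gb B = cl (1, w)"
proof -
  have "(SOME v. v \<in> B) \<in> B" using assms(2) by (rule someI)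
  then show ?thesis unfolding gb_def cl_eq using r_p2[OF assms(1)] assms(2) by blast
qed

lemma cl0: assumes B: "B \<in> p1 - t1" "v \<in> B" shows "cl (0, v) \<subseteq> {c. fst c = 0 \<and> snd c \<in> B}"
proof (rule closed)
  fix x y assume xy: "(x, y) \<in> R" and x: "x \<in> {c. fst c = 0 \<and> snd c \<in> B}"
  have u: "Ba = B" if "Ba \<in> p1" "snd x \<in> Ba" for Ba
    using part_uniq[OF P1 that(1) _ that(2)] B x by blast
  from xy have "(\<exists>B\<in>t1. fst x \<in> {0,1} \<and> fst y \<in> {0,1} \<and> snd x \<in> B \<and> snd y \<in> B)
  \<or> (\<exists>B\<in>p1 - t1. (fst x = 0 \<and> fst y = 0 \<or> fst x = 1 \<and> fst y = 1) \<and> snd x \<in> B \<and> snd y \<in> B)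
  \<or> (\<exists>B\<in>t2. fst x \<in> {1,2} \<and> fst y \<in> {1,2} \<and> snd x \<in> B \<and> snd y \<in> B)
  \<or> (\<exists>B\<in>p2 - t2. (fst x = 1 \<and> fst y = 1 \<or> fst x = 2 \<and> fst y = 2) \<and> snd x \<in> B \<and> snd y \<in> B)"
    by (simp only: stack_rel_diag)
  then show "y \<in> {c. fst c = 0 \<and> snd c \<in> B}"
  proof (elim disjE bexE)
    fix Ba assume a: "Ba \<in> t1" "fst x \<in> {0,1} \<and> fst y \<in> {0,1} \<and> snd x \<in> Ba \<and> snd y \<in> Ba"
    then have "Ba = B" using u T1 by blast
    then show ?thesis using a B by blast
  next
    fix Ba assume a: "Ba \<in> p1 - t1" "(fst x = 0 \<and> fst y = 0 \<or> fst x = 1 \<and> fst y = 1) \<and> snd x \<in> Ba \<and> snd y \<in> Ba"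
    then have "Ba = B" using u by blast
    then show ?thesis using a x by auto
  next
    fix Ba assume a: "Ba \<in> t2" "fst x \<in> {1,2} \<and> fst y \<in> {1,2} \<and> snd x \<in> Ba \<and> snd y \<in> Ba"
    then show ?thesis using x by auto
  next
    fix Ba assume a: "Ba \<in> p2 - t2" "(fst x = 1 \<and> fst y = 1 \<or> fst x = 2 \<and> fst y = 2) \<and> snd x \<in> Ba \<and> snd y \<in> Ba"
    then show ?thesis using x by auto
  qed
qed (use B in auto)

lemma cl2: assumes B: "B \<in> p2 - t2" "v \<in> B" shows "cl (2, v) \<subseteq> {c. fst c = 2 \<and> snd c \<in> B}"
proof (rule closed)
  fix x y assume xy: "(x, y) \<in> R" and x: "x \<in> {c. fst c = 2 \<and> snd c \<in> B}"
  have u: "Ba = B" if "Ba \<in> p2" "snd x \<in> Ba" for Ba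
    using part_uniq[OF P2 that(1) _ that(2)] B x by blast
  from xy have "(\<exists>B\<in>t1. fst x \<in> {0,1} \<and> fst y \<in> {0,1} \<and> snd x \<in> B \<and> snd y \<in> B)
  \<or> (\<exists>B\<in>p1 - t1. (fst x = 0 \<and> fst y = 0 \<or> fst x = 1 \<and> fst y = 1) \<and> snd x \<in> B \<and> snd y \<in> B)
  \<or> (\<exists>B\<in>t2. fst x \<in> {1,2} \<and> fst y \<in> {1,2} \<and> snd x \<in> B \<and> snd y \<in> B)
  \<or> (\<exists>B\<in>p2 - t2. (fst x = 1 \<and> fst y = 1 \<or> fst x = 2 \<and> fst y = 2) \<and> snd x \<in> B \<and> snd y \<in> B)"
    by (simp only: stack_rel_diag)
  then show "y \<in> {c. fst c = 2 \<and> snd c \<in> B}"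
  proof (elim disjE bexE)
    fix Ba assume a: "Ba \<in> t1" "fst x \<in> {0,1} \<and> fst y \<in> {0,1} \<and> snd x \<in> Ba \<and> snd y \<in> Ba"
    then show ?thesis using x by auto
  next
    fix Ba assume a: "Ba \<in> p1 - t1" "(fst x = 0 \<and> fst y = 0 \<or> fst x = 1 \<and> fst y = 1) \<and> snd x \<in> Ba \<and> snd y \<in> Ba"
    then show ?thesis using x by auto
  next
    fix Ba assume a: "Ba \<in> t2" "fst x \<in> {1,2} \<and> fst y \<in> {1,2} \<and> snd x \<in> Ba \<and> snd y \<in> Ba"
    then have "Ba = B" using u T2 by blast
    then show ?thesis using a B by blast
  next
    fix Ba assume a: "Ba \<in> p2 - t2" "(fst x = 1 \<and> fst y = 1 \<or> fst x = 2 \<and> fst y = 2) \<and> snd x \<in> Ba \<and> snd y \<in> Ba"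
    then have "Ba = B" using u by blast
    then show ?thesis using a x by auto
  qed
qed (use B in auto)

lemma U_mem: "n \<le> 2 \<Longrightarrow> v \<in> base k \<Longrightarrow> (n, v) \<in> U"
  by (subst U_iff) simp

lemma U_fst: "x \<in> U \<Longrightarrow> fst x \<le> 2"
  by (subst (asm) U_iff) simp

lemma U_snd: "x \<in> U \<Longrightarrow> snd x \<in> base k"
  by (subst (asm) U_iff) simp

lemma Pm_sub1: "Pm \<subseteq> gb ` (p1 - t1)"
proof
  fix C assume C: "C \<in> Pm"
  then have Cc: "C \<in> comps" and pure: "\<forall>c\<in>C. fst c = 1" unfolding Pm_def by blast+
  obtain x where x2: "C = cl x" and x1: "x \<in> U" using Cc by (rule comp_obtain)
  have "x \<in> C" using x2 cl_refl by simp
  then have fx: "fst x = 1" using pure by blast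
  obtain v where xv: "x = (1, v)" using fx by (cases x) auto
  have vb: "v \<in> base k" using U_snd[OF x1] xv by simp
  obtain B where B: "B \<in> p1" "v \<in> B" using part_cover[OF P1 vb] by blast
  have "B \<notin> t1"
  proof
    assume "B \<in> t1"
    then have "(0, v) \<in> cl (1, v)" unfolding mem_cl by (intro r_into_rtrancl r_t1[OF _ B(2)])
    then show False using pure x2 xv by fastforce
  qed
  moreover have "gb B = C" using gb_eq1[OF B] x2 xv by simp
  ultimately show "C \<in> gb ` (p1 - t1)" using B by blast
qed

lemma Pm_sub2: "Pm \<subseteq> gb ` (p2 - t2)"
proof
  fix C assume C: "C \<in> Pm"
  then have Cc: "C \<in> comps" and pure: "\<forall>c\<in>C. fst c = 1" unfolding Pm_def by blast+
  obtain x where x2: "C = cl x" and x1: "x \<in> U" using Cc by (rule comp_obtain)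
  have "x \<in> C" using x2 cl_refl by simp
  then have fx: "fst x = 1" using pure by blast
  obtain v where xv: "x = (1, v)" using fx by (cases x) auto
  have vb: "v \<in> base k" using U_snd[OF x1] xv by simp
  obtain B where B: "B \<in> p2" "v \<in> B" using part_cover[OF P2 vb] by blast
  have "B \<notin> t2"
  proof
    assume "B \<in> t2"
    then have "(2, v) \<in> cl (1, v)" unfolding mem_cl by (intro r_into_rtrancl r_t2[OF _ B(2)])
    then show False using pure x2 xv by fastforce
  qed
  moreover have "gb B = C" using gb_eq2[OF B] x2 xv by simp
  ultimately show "C \<in> gb ` (p2 - t2)" using B by blast
qed

lemma Th_sub1: "Th \<subseteq> gb ` t1"
proof
  fix C assume C: "C \<in> Th"
  then have Cc: "C \<in> comps" and c0: "\<exists>c\<in>C. fst c = 0" and c2: "\<exists>c\<in>C. fst c = 2"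
    unfolding Th_def by blast+
  obtain c where c: "c \<in> C" "fst c = 0" using c0 by blast
  obtain v where cv: "c = (0, v)" using c by (cases c) auto
  have "c \<in> U" using comp_U[OF Cc] c(1) by (rule subsetD)
  from U_snd[OF this] have vb: "v \<in> base k" using cv by simp
  obtain B where B: "B \<in> p1" "v \<in> B" using part_cover[OF P1 vb] by blast
  have Ce: "C = cl (0, v)" using comp_cl[OF Cc c(1)] cv by simp
  have "B \<in> t1"
  proof (rule ccontr)
    assume "B \<notin> t1"
    then have "C \<subseteq> {c. fst c = 0 \<and> snd c \<in> B}" using cl0 B Ce by blast
    then show False using c2 by auto
  qed
  moreover have "gb B = C"
  proof -
    have "((1, v), (0, v)) \<in> R\<^sup>*" by (intro r_into_rtrancl r_t1[OF calculation B(2)])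
    then show ?thesis using gb_eq1[OF B] Ce cl_eq by simp
  qed
  ultimately show "C \<in> gb ` t1" by blast
qed

lemma Th_sub2: "Th \<subseteq> gb ` t2"
proof
  fix C assume C: "C \<in> Th"
  then have Cc: "C \<in> comps" and c0: "\<exists>c\<in>C. fst c = 0" and c2: "\<exists>c\<in>C. fst c = 2"
    unfolding Th_def by blast+
  obtain c where c: "c \<in> C" "fst c = 2" using c2 by blast
  obtain v where cv: "c = (2, v)" using c by (cases c) auto
  have "c \<in> U" using comp_U[OF Cc] c(1) by (rule subsetD)
  from U_snd[OF this] have vb: "v \<in> base k" using cv by simp
  obtain B where B: "B \<in> p2" "v \<in> B" using part_cover[OF P2 vb] by blast
  have Ce: "C = cl (2, v)" using comp_cl[OF Cc c(1)] cv by simp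
  have "B \<in> t2"
  proof (rule ccontr)
    assume "B \<notin> t2"
    then have "C \<subseteq> {c. fst c = 2 \<and> snd c \<in> B}" using cl2 B Ce by blast
    then show False using c0 by auto
  qed
  moreover have "gb B = C"
  proof -
    have "((1, v), (2, v)) \<in> R\<^sup>*" by (intro r_into_rtrancl r_t2[OF calculation B(2)])
    then show ?thesis using gb_eq2[OF B] Ce cl_eq by simp
  qed
  ultimately show "C \<in> gb ` t2" by blast
qed

definition "hh C = unlay ` (C \<inter> {c. fst c \<noteq> 1})"

lemma unlay_eq: "unlay c = (fst c = 2, snd c)"
  by (simp add: unlay_def)

lemma prop_eq: "prop_num (diag_prod (diag (p1, t1)) (diag (p2, t2))) = card Th"
proof -
  have e: "{B \<in> diag_prod (diag (p1, t1)) (diag (p2, t2)). (\<exists>v. (False, v) \<in> B) \<and> (\<exists>v. (True, v) \<in> B)}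
     = hh ` Th" (is "?L = _")
  proof
    show "?L \<subseteq> hh ` Th"
    proof
      fix X assume X: "X \<in> ?L"
      then obtain C where C: "C \<in> comps" "X = hh C"
        unfolding diag_prod_def hh_def by blast
      obtain v w where vw: "(False, v) \<in> X" "(True, w) \<in> X" using X by blast
      have "(False, v) \<in> unlay ` (C \<inter> {c. fst c \<noteq> 1})" using vw(1) C(2) unfolding hh_def by simp
      then obtain c where ce: "(False, v) = unlay c" and cm: "c \<in> C \<inter> {c. fst c \<noteq> 1}" by (rule imageE)
      have c: "c \<in> C" "fst c \<noteq> 1" "unlay c = (False, v)" using ce cm by auto
      have "(True, w) \<in> unlay ` (C \<inter> {c. fst c \<noteq> 1})" using vw(2) C(2) unfolding hh_def by simp
      then obtain c' where ce': "(True, w) = unlay c'" and cm': "c' \<in> C \<inter> {c. fst c \<noteq> 1}" by (rule imageE)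
      have c': "c' \<in> C" "fst c' \<noteq> 1" "unlay c' = (True, w)" using ce' cm' by auto
      have "fst c \<le> 2" by (rule U_fst[OF subsetD[OF comp_U[OF C(1)] c(1)]])
      then have "fst c = 0" using c unfolding unlay_eq by auto
      moreover have "fst c' = 2" using c' unfolding unlay_eq by auto
      ultimately have "C \<in> Th" unfolding Th_def using C c c' by blast
      then show "X \<in> hh ` Th" using C by blast
    qed
  next
    show "hh ` Th \<subseteq> ?L"
    proof
      fix X assume "X \<in> hh ` Th"
      then obtain C where C: "C \<in> Th" "X = hh C" by blast
      obtain c where c: "c \<in> C" "fst c = 0" using C(1) unfolding Th_def by blast
      obtain c' where c': "c' \<in> C" "fst c' = 2" using C(1) unfolding Th_def by blast
      have "C \<in> comps" using C(1) unfolding Th_def by blast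
      then have "X \<in> diag_prod (diag (p1, t1)) (diag (p2, t2))"
        unfolding diag_prod_def C(2) hh_def
        by (intro CollectI exI[of _ C] conjI refl bexI[of _ c]) (simp_all add: c)
      moreover have "(False, snd c) \<in> X" unfolding C(2) hh_def
        by (rule image_eqI[of _ _ c]) (simp_all add: c unlay_eq)
      moreover have "(True, snd c') \<in> X" unfolding C(2) hh_def
        by (rule image_eqI[of _ _ c']) (simp_all add: c' unlay_eq)
      ultimately show "X \<in> ?L" by blast
    qed
  qed
  have inj: "inj_on hh Th"
  proof (rule inj_onI)
    fix C C' assume C: "C \<in> Th" "C' \<in> Th" "hh C = hh C'"
    obtain c where c: "c \<in> C" "fst c = 0" using C(1) unfolding Th_def by blast
    have "unlay c \<in> hh C'" using C(3) c unfolding hh_def by force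
    then have "unlay c \<in> unlay ` (C' \<inter> {c. fst c \<noteq> 1})" unfolding hh_def by simp
    then obtain c' where ce': "unlay c = unlay c'" and cm': "c' \<in> C' \<inter> {c. fst c \<noteq> 1}" by (rule imageE)
    have c': "c' \<in> C'" "fst c' \<noteq> 1" "unlay c' = unlay c" using ce' cm' by auto
    have Cc: "C \<in> comps" "C' \<in> comps" using C unfolding Th_def by blast+
    have "fst c' \<le> 2" by (rule U_fst[OF subsetD[OF comp_U[OF Cc(2)] c'(1)]])
    then have "c' = c" using c c' unfolding unlay_eq by (cases c; cases c') auto
    then show "C = C'" using comp_cl[OF Cc(1) c(1)] comp_cl[OF Cc(2)] c'(1) by simp
  qed
  show ?thesis unfolding prop_num_def e using card_image[OF inj] .
qed


lemma lmid_eq: "lmid (diag (p1, t1)) (diag (p2, t2)) = card Pm"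
  unfolding lmid_def Pm_def by (rule refl)

lemma finite_p1: "finite p1"
  using part_sub[OF P1] finite_base by (meson PowI finite_Pow_iff rev_finite_subset subsetI)
lemma finite_p2: "finite p2"
  using part_sub[OF P2] finite_base by (meson PowI finite_Pow_iff rev_finite_subset subsetI)

lemma pure1: assumes "cl (1, w) \<in> Pm" "B \<in> t1" "w \<in> B" shows False
proof -
  have "(0, w) \<in> cl (1, w)" unfolding mem_cl by (intro r_into_rtrancl r_t1[OF assms(2,3)])
  then show False using assms(1) unfolding Pm_def by fastforce
qed
lemma pure2: assumes "cl (1, w) \<in> Pm" "B \<in> t2" "w \<in> B" shows False
proof -
  have "(2, w) \<in> cl (1, w)" unfolding mem_cl by (intro r_into_rtrancl r_t2[OF assms(2,3)])
  then show False using assms(1) unfolding Pm_def by fastforce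
qed

lemma eq_case:
  assumes "card (p1 - t1) \<le> card Pm" "card (p2 - t2) \<le> card Pm"
    "card t1 \<le> card Th" "card t2 \<le> card Th"
  shows "p1 = p2 \<and> t1 = t2"
proof -
  have f: "finite (p1 - t1)" "finite (p2 - t2)" "finite t1" "finite t2"
    using finite_p1 finite_p2 T1 T2 finite_subset by auto
  note c1 = card_lemma[OF f(1) Pm_sub1 assms(1)]
  note c2 = card_lemma[OF f(2) Pm_sub2 assms(2)]
  note c3 = card_lemma[OF f(3) Th_sub1 assms(3)]
  note c4 = card_lemma[OF f(4) Th_sub2 assms(4)]
  have G1: "\<And>B w. B \<in> p1 \<Longrightarrow> w \<in> B \<Longrightarrow> cl (1, w) = gb B" using gb_eq1 by simp
  have G2: "\<And>B w. B \<in> p2 \<Longrightarrow> w \<in> B \<Longrightarrow> cl (1, w) = gb B" using gb_eq2 by simp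
  have nt1: "p1 - t1 \<subseteq> p2 - t2"
  proof (rule blocks_sub[OF P1 P2 _ _ conjunct2[OF c1] conjunct2[OF c2], of "\<lambda>w. cl (1, w)"])
    fix B B' w assume a: "B \<in> p1 - t1" "w \<in> B" "B' \<in> p2" "w \<in> B'"
    have e: "cl (1, w) = gb B" using G1[of B w] a by blast
    have "cl (1, w) \<in> Pm" unfolding e conjunct1[OF c1] using a(1) by (rule imageI)
    then show "B' \<in> p2 - t2" using pure2 a by blast
  next
    fix B B' w assume a: "B \<in> p2 - t2" "w \<in> B" "B' \<in> p1" "w \<in> B'"
    have e: "cl (1, w) = gb B" using G2[of B w] a by blast
    have "cl (1, w) \<in> Pm" unfolding e conjunct1[OF c2] using a(1) by (rule imageI)
    then show "B' \<in> p1 - t1" using pure1 a by blast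
  qed (use G1 G2 in auto)
  have nt2: "p2 - t2 \<subseteq> p1 - t1"
  proof (rule blocks_sub[OF P2 P1 _ _ conjunct2[OF c2] conjunct2[OF c1], of "\<lambda>w. cl (1, w)"])
    fix B B' w assume a: "B \<in> p2 - t2" "w \<in> B" "B' \<in> p1" "w \<in> B'"
    have e: "cl (1, w) = gb B" using G2[of B w] a by blast
    have "cl (1, w) \<in> Pm" unfolding e conjunct1[OF c2] using a(1) by (rule imageI)
    then show "B' \<in> p1 - t1" using pure1 a by blast
  next
    fix B B' w assume a: "B \<in> p1 - t1" "w \<in> B" "B' \<in> p2" "w \<in> B'"
    have e: "cl (1, w) = gb B" using G1[of B w] a by blast
    have "cl (1, w) \<in> Pm" unfolding e conjunct1[OF c1] using a(1) by (rule imageI)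
    then show "B' \<in> p2 - t2" using pure2 a by blast
  qed (use G1 G2 in auto)
  have nt: "p1 - t1 = p2 - t2" using nt1 nt2 by blast
  have tt1: "t1 \<subseteq> t2"
  proof (rule blocks_sub[OF P1 P2 T1 T2 conjunct2[OF c3] conjunct2[OF c4], of "\<lambda>w. cl (1, w)"])
    fix B B' w assume a: "B \<in> t1" "w \<in> B" "B' \<in> p2" "w \<in> B'"
    show "B' \<in> t2"
    proof (rule ccontr)
      assume "B' \<notin> t2"
      then have "B' \<in> p1 - t1" using nt a by blast
      then show False using part_uniq[OF P1 _ _ a(2) a(4)] a T1 by blast
    qed
  next
    fix B B' w assume a: "B \<in> t2" "w \<in> B" "B' \<in> p1" "w \<in> B'"
    show "B' \<in> t1"
    proof (rule ccontr)
      assume "B' \<notin> t1"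
      then have "B' \<in> p2 - t2" using nt a by blast
      then show False using part_uniq[OF P2 _ _ a(2) a(4)] a T2 by blast
    qed
  qed (use G1 G2 T1 T2 in auto)
  have tt2: "t2 \<subseteq> t1"
  proof (rule blocks_sub[OF P2 P1 T2 T1 conjunct2[OF c4] conjunct2[OF c3], of "\<lambda>w. cl (1, w)"])
    fix B B' w assume a: "B \<in> t2" "w \<in> B" "B' \<in> p1" "w \<in> B'"
    show "B' \<in> t1"
    proof (rule ccontr)
      assume "B' \<notin> t1"
      then have "B' \<in> p2 - t2" using nt a by blast
      then show False using part_uniq[OF P2 _ _ a(2) a(4)] a T2 by blast
    qed
  next
    fix B B' w assume a: "B \<in> t1" "w \<in> B" "B' \<in> p2" "w \<in> B'"
    show "B' \<in> t2"
    proof (rule ccontr)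
      assume "B' \<notin> t2"
      then have "B' \<in> p1 - t1" using nt a by blast
      then show False using part_uniq[OF P1 _ _ a(2) a(4)] a T1 by blast
    qed
  qed (use G1 G2 T1 T2 in auto)
  have "t1 = t2" using tt1 tt2 by blast
  moreover have "p1 = p2" using nt calculation T1 T2 by blast
  ultimately show ?thesis by simp
qed

lemma Pm_le: "card Pm \<le> card (p1 - t1)"
proof -
  have f: "finite (p1 - t1)" using finite_p1 by simp
  have "card Pm \<le> card (gb ` (p1 - t1))" by (rule card_mono[OF finite_imageI[OF f] Pm_sub1])
  also have "\<dots> \<le> card (p1 - t1)" by (rule card_image_le[OF f])
  finally show ?thesis .
qed
lemma Pm_le2: "card Pm \<le> card (p2 - t2)"
proof -
  have f: "finite (p2 - t2)" using finite_p2 by simp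
  have "card Pm \<le> card (gb ` (p2 - t2))" by (rule card_mono[OF finite_imageI[OF f] Pm_sub2])
  also have "\<dots> \<le> card (p2 - t2)" by (rule card_image_le[OF f])
  finally show ?thesis .
qed
lemma Th_le: "card Th \<le> card t1"
proof -
  have f: "finite t1" using finite_p1 T1 finite_subset by blast
  have "card Th \<le> card (gb ` (t1))" by (rule card_mono[OF finite_imageI[OF f] Th_sub1])
  also have "\<dots> \<le> card (t1)" by (rule card_image_le[OF f])
  finally show ?thesis .
qed
lemma Th_le2: "card Th \<le> card t2"
proof -
  have f: "finite t2" using finite_p2 T2 finite_subset by blast
  have "card Th \<le> card (gb ` (t2))" by (rule card_mono[OF finite_imageI[OF f] Th_sub2])
  also have "\<dots> \<le> card (t2)" by (rule card_image_le[OF f])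
  finally show ?thesis .
qed

lemma diag_lower:
  assumes e: "p2 = p1" "t2 = t1"
  shows "card (p1 - t1) \<le> card Pm \<and> card t1 \<le> card Th"
proof -
  have disj: "(\<exists>B\<in>t1. fst x \<in> {0,1} \<and> fst y \<in> {0,1} \<and> snd x \<in> B \<and> snd y \<in> B)
  \<or> (\<exists>B\<in>p1 - t1. (fst x = 0 \<and> fst y = 0 \<or> fst x = 1 \<and> fst y = 1) \<and> snd x \<in> B \<and> snd y \<in> B)
  \<or> (\<exists>B\<in>t1. fst x \<in> {1,2} \<and> fst y \<in> {1,2} \<and> snd x \<in> B \<and> snd y \<in> B)
  \<or> (\<exists>B\<in>p1 - t1. (fst x = 1 \<and> fst y = 1 \<or> fst x = 2 \<and> fst y = 2) \<and> snd x \<in> B \<and> snd y \<in> B)"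
    if "(x, y) \<in> R" for x y
    using that by (simp only: stack_rel_diag e)
  have csnd: "cl (1, v) \<subseteq> {c. snd c \<in> B}" if B: "B \<in> p1" "v \<in> B" for B v
  proof (rule closed)
    fix x y assume xy: "(x, y) \<in> R" and x: "x \<in> {c. snd c \<in> B}"
    have u: "Ba = B" if "Ba \<in> p1" "snd x \<in> Ba" for Ba
      using part_uniq[OF P1 that(1) B(1) that(2)] x by blast
    from disj[OF xy] show "y \<in> {c. snd c \<in> B}"
    proof (elim disjE bexE)
      fix Ba assume a: "Ba \<in> t1" "fst x \<in> {0,1} \<and> fst y \<in> {0,1} \<and> snd x \<in> Ba \<and> snd y \<in> Ba"
      then have "Ba = B" using u T1 by blast
      then show ?thesis using a by blast
    next
      fix Ba assume a: "Ba \<in> p1 - t1" "(fst x = 0 \<and> fst y = 0 \<or> fst x = 1 \<and> fst y = 1) \<and> snd x \<in> Ba \<and> snd y \<in> Ba"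
      then have "Ba = B" using u by blast
      then show ?thesis using a by blast
    next
      fix Ba assume a: "Ba \<in> t1" "fst x \<in> {1,2} \<and> fst y \<in> {1,2} \<and> snd x \<in> Ba \<and> snd y \<in> Ba"
      then have "Ba = B" using u T1 by blast
      then show ?thesis using a by blast
    next
      fix Ba assume a: "Ba \<in> p1 - t1" "(fst x = 1 \<and> fst y = 1 \<or> fst x = 2 \<and> fst y = 2) \<and> snd x \<in> Ba \<and> snd y \<in> Ba"
      then have "Ba = B" using u by blast
      then show ?thesis using a by blast
    qed
  qed (use B in auto)
  have cpure: "cl (1, v) \<subseteq> {c. fst c = 1}" if B: "B \<in> p1 - t1" "v \<in> B" for B v
  proof -
    have "cl (1, v) \<subseteq> {c. fst c = 1 \<and> snd c \<in> B}"
    proof (rule closed)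
      fix x y assume xy: "(x, y) \<in> R" and x: "x \<in> {c. fst c = 1 \<and> snd c \<in> B}"
      have u: "Ba = B" if "Ba \<in> p1" "snd x \<in> Ba" for Ba
        using part_uniq[OF P1 that(1) _ that(2)] B x by blast
      from disj[OF xy] show "y \<in> {c. fst c = 1 \<and> snd c \<in> B}"
      proof (elim disjE bexE)
        fix Ba assume a: "Ba \<in> t1" "fst x \<in> {0,1} \<and> fst y \<in> {0,1} \<and> snd x \<in> Ba \<and> snd y \<in> Ba"
        then have "Ba = B" using u T1 by blast
        then show ?thesis using a B by blast
      next
        fix Ba assume a: "Ba \<in> p1 - t1" "(fst x = 0 \<and> fst y = 0 \<or> fst x = 1 \<and> fst y = 1) \<and> snd x \<in> Ba \<and> snd y \<in> Ba"
        then have "Ba = B" using u by blast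
        then show ?thesis using a x by auto
      next
        fix Ba assume a: "Ba \<in> t1" "fst x \<in> {1,2} \<and> fst y \<in> {1,2} \<and> snd x \<in> Ba \<and> snd y \<in> Ba"
        then have "Ba = B" using u T1 by blast
        then show ?thesis using a B by blast
      next
        fix Ba assume a: "Ba \<in> p1 - t1" "(fst x = 1 \<and> fst y = 1 \<or> fst x = 2 \<and> fst y = 2) \<and> snd x \<in> Ba \<and> snd y \<in> Ba"
        then have "Ba = B" using u by blast
        then show ?thesis using a x by auto
      qed
    qed (use B in auto)
    then show ?thesis by blast
  qed
  have inj: "inj_on gb p1"
  proof (rule inj_onI)
    fix B B' assume a: "B \<in> p1" "B' \<in> p1" "gb B = gb B'"
    obtain v where v: "v \<in> B" using part_ne[OF P1 a(1)] by blast
    obtain v' where v': "v' \<in> B'" using part_ne[OF P1 a(2)] by blast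
    have "(1, v') \<in> cl (1, v)" using a gb_eq1[OF a(1) v] gb_eq1[OF a(2) v'] cl_refl by simp
    then have "v' \<in> B" using csnd[OF a(1) v] by auto
    then show "B = B'" using part_uniq[OF P1 a(1) a(2) _ v'] by simp
  qed
  have inU: "cl (1, v) \<in> comps" if "B \<in> p1" "v \<in> B" for B v
  proof -
    have "v \<in> base k" using part_sub[OF P1 that(1)] that(2) by blast
    then have "(1, v) \<in> U" by (intro U_mem) simp_all
    then show ?thesis unfolding comps_eq by (rule imageI)
  qed
  have s1: "gb ` (p1 - t1) \<subseteq> Pm"
  proof
    fix C assume "C \<in> gb ` (p1 - t1)"
    then obtain B where B: "B \<in> p1 - t1" "C = gb B" by blast
    obtain v where v: "v \<in> B" using part_ne[OF P1] B by blast
    show "C \<in> Pm" unfolding Pm_def using B gb_eq1[of B v] v cpure[OF B(1) v] inU[of B v] by auto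
  qed
  have s2: "gb ` t1 \<subseteq> Th"
  proof
    fix C assume "C \<in> gb ` t1"
    then obtain B where B: "B \<in> t1" "C = gb B" by blast
    obtain v where v: "v \<in> B" using part_ne[OF P1] B T1 by blast
    have Bt2: "B \<in> t2" using B(1) e by simp
    have c0: "(0, v) \<in> cl (1, v)" unfolding mem_cl by (intro r_into_rtrancl r_t1[OF B(1) v])
    have c2: "(2, v) \<in> cl (1, v)" unfolding mem_cl by (intro r_into_rtrancl r_t2[OF Bt2 v])
    have Ce: "C = cl (1, v)" using gb_eq1[of B v] B v T1 by blast
    have Bp: "B \<in> p1" using B(1) T1 by blast
    have "C \<in> comps" unfolding Ce by (rule inU[OF Bp v])
    moreover have "\<exists>c\<in>C. fst c = 0" using c0 Ce by (intro bexI[of _ "(0, v)"]) simp_all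
    moreover have "\<exists>c\<in>C. fst c = 2" using c2 Ce by (intro bexI[of _ "(2, v)"]) simp_all
    ultimately show "C \<in> Th" unfolding Th_def by (intro CollectI conjI)
  qed
  have fP: "finite Pm" "finite Th" using finite_comps unfolding Pm_def Th_def by auto
  have "card (p1 - t1) = card (gb ` (p1 - t1))"
    using card_image[OF inj_on_subset[OF inj]] by (metis Diff_subset)
  also have "\<dots> \<le> card Pm" using card_mono[OF fP(1) s1] .
  finally have 1: "card (p1 - t1) \<le> card Pm" .
  have "card t1 = card (gb ` t1)"
    using card_image[OF inj_on_subset[OF inj T1]] by simp
  also have "\<dots> \<le> card Th" using card_mono[OF fP(2) s2] .
  finally show ?thesis using 1 by simp
qed

end



lemma pair_facts:
  assumes "partition_on (base k) p1" "partition_on (base k) p2" "t1 \<subseteq> p1" "t2 \<subseteq> p2"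
  shows "lmid (diag (p1, t1)) (diag (p2, t2)) \<le> card (p1 - t1)"
    and "lmid (diag (p1, t1)) (diag (p2, t2)) \<le> card (p2 - t2)"
    and "lmid (diag (p1, t1)) (diag (p2, t2)) = card (p1 - t1) \<Longrightarrow>
         lmid (diag (p1, t1)) (diag (p2, t2)) = card (p2 - t2) \<Longrightarrow>
         prop_num (diag_prod (diag (p1, t1)) (diag (p2, t2))) = card t1 \<Longrightarrow>
         prop_num (diag_prod (diag (p1, t1)) (diag (p2, t2))) = card t2 \<Longrightarrow> p1 = p2 \<and> t1 = t2"
proof -
  interpret two k p1 t1 p2 t2 using assms by unfold_locales
  show "lmid (diag (p1, t1)) (diag (p2, t2)) \<le> card (p1 - t1)" unfolding lmid_eq by (rule Pm_le)
  show "lmid (diag (p1, t1)) (diag (p2, t2)) \<le> card (p2 - t2)" unfolding lmid_eq by (rule Pm_le2)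
  assume a: "lmid (diag (p1, t1)) (diag (p2, t2)) = card (p1 - t1)"
         "lmid (diag (p1, t1)) (diag (p2, t2)) = card (p2 - t2)"
         "prop_num (diag_prod (diag (p1, t1)) (diag (p2, t2))) = card t1"
         "prop_num (diag_prod (diag (p1, t1)) (diag (p2, t2))) = card t2"
  show "p1 = p2 \<and> t1 = t2"
    by (rule eq_case) (use a in \<open>simp_all only: lmid_eq prop_eq\<close>)
qed

lemma diag_facts:
  assumes "partition_on (base k) p" "t \<subseteq> p"
  shows "lmid (diag (p, t)) (diag (p, t)) = card (p - t)"
    and "prop_num (diag_prod (diag (p, t)) (diag (p, t))) = card t"
proof -
  interpret two k p t p t using assms by unfold_locales
  have l: "card (p - t) \<le> card Pm \<and> card t \<le> card Th" by (rule diag_lower) simp_all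
  show "lmid (diag (p, t)) (diag (p, t)) = card (p - t)" unfolding lmid_eq using l Pm_le by simp
  show "prop_num (diag_prod (diag (p, t)) (diag (p, t))) = card t" unfolding prop_eq using l Th_le by simp
qed

lemma gact_gact: "gact ` (gact ` B) = B"
  by (force simp: gact_def image_image)

lemma card_orbit:
  assumes fin: "finite T" and stab: "\<forall>B\<in>T. gact ` B \<in> T"
  shows "card T = 2 * card {{B, gact ` B} | B. B \<in> T \<and> gact ` B \<noteq> B} + card {B \<in> T. gact ` B = B}"
proof -
  define Nn where "Nn = {B \<in> T. gact ` B \<noteq> B}"
  define F where "F = {B \<in> T. gact ` B = B}"
  define Q where "Q = {{B, gact ` B} | B. B \<in> T \<and> gact ` B \<noteq> B}"
  have T: "T = Nn \<union> F" "Nn \<inter> F = {}" unfolding Nn_def F_def by auto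
  have fN: "finite Nn" "finite F" using fin unfolding Nn_def F_def by auto
  have c1: "card T = card Nn + card F" using T fN card_Un_disjoint by metis
  have Qimg: "Q = (\<lambda>B. {B, gact ` B}) ` Nn" unfolding Q_def Nn_def by auto
  have fQ: "finite Q" unfolding Qimg using fN by simp
  have UQ: "\<Union>Q = Nn"
  proof
    show "\<Union>Q \<subseteq> Nn" unfolding Q_def Nn_def using stab gact_gact by fastforce
    show "Nn \<subseteq> \<Union>Q" unfolding Q_def Nn_def by blast
  qed
  have pd: "pairwise disjnt Q"
  proof (rule pairwiseI)
    fix q1 q2 assume q: "q1 \<in> Q" "q2 \<in> Q" "q1 \<noteq> q2"
    obtain B where B: "q1 = {B, gact ` B}" using q(1) unfolding Q_def by blast
    obtain C where C: "q2 = {C, gact ` C}" using q(2) unfolding Q_def by blast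
    have "B \<noteq> C" using q(3) B C by blast
    moreover have "B \<noteq> gact ` C" using q(3) B C gact_gact by (metis insert_commute)
    moreover have "gact ` B \<noteq> C" using q(3) B C gact_gact by (metis insert_commute)
    moreover have "gact ` B \<noteq> gact ` C" using \<open>B \<noteq> C\<close> gact_gact by metis
    ultimately show "disjnt q1 q2" unfolding B C disjnt_def by auto
  qed
  have "card Nn = sum card Q" unfolding UQ[symmetric]
    by (rule card_Union_disjoint[OF pd]) (use fQ Q_def in auto)
  also have "\<dots> = sum (\<lambda>q. 2) Q"
  proof (rule sum.cong)
    fix q assume "q \<in> Q"
    then obtain B where "q = {B, gact ` B}" "gact ` B \<noteq> B" unfolding Q_def by blast
    then show "card q = 2" by auto
  qed simp
  also have "\<dots> = 2 * card Q" by simp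
  finally show ?thesis using c1 unfolding Q_def F_def by simp
qed

lemma Jset_props:
  assumes "(p, t) \<in> Jset k s1 s2"
  shows "partition_on (base k) p" "t \<subseteq> p" "card t = 2 * s1 + s2"
proof -
  from assms have a0: "Z2_stable_partition k p \<and> t \<subseteq> p \<and> (\<forall>B\<in>t. gact ` B \<in> t)
      \<and> card {{B, gact ` B} | B. B \<in> t \<and> gact ` B \<noteq> B} = s1 \<and> card {B \<in> t. gact ` B = B} = s2"
    unfolding Jset_def mem_Collect_eq case_prod_conv .
  note a = a0[THEN conjunct1] a0[THEN conjunct2, THEN conjunct1] a0[THEN conjunct2, THEN conjunct2, THEN conjunct1]
     a0[THEN conjunct2, THEN conjunct2, THEN conjunct2, THEN conjunct1]
     a0[THEN conjunct2, THEN conjunct2, THEN conjunct2, THEN conjunct2]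
  show P: "partition_on (base k) p" using a(1) unfolding Z2_stable_partition_def by simp
  show "t \<subseteq> p" by (rule a(2))
  have fb: "finite (base k)" unfolding base_def by simp
  have pP: "p \<subseteq> Pow (base k)" using part_sub[OF P] by blast
  have "finite p" by (rule finite_subset[OF pP]) (simp add: fb)
  then have ft: "finite t" by (rule finite_subset[OF a(2)])
  have "card t = 2 * card {{B, gact ` B} | B. B \<in> t \<and> gact ` B \<noteq> B} + card {B \<in> t. gact ` B = B}"
    by (rule card_orbit[OF ft a(3)])
  then show "card t = 2 * s1 + s2" unfolding a(4) a(5) .
qed

lemma finite_Jset: "finite (Jset k s1 s2)"
proof -
  have "Jset k s1 s2 \<subseteq> Pow (Pow (base k)) \<times> Pow (Pow (base k))"
  proof
    fix D assume "D \<in> Jset k s1 s2"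
    then obtain p t where D: "D = (p, t)" "(p, t) \<in> Jset k s1 s2" by (cases D) auto
    have "partition_on (base k) p" "t \<subseteq> p" using Jset_props[OF D(2)] by auto
    then have "p \<subseteq> Pow (base k)" "t \<subseteq> Pow (base k)" using part_sub by blast+
    then show "D \<in> Pow (Pow (base k)) \<times> Pow (Pow (base k))" using D(1) by simp
  qed
  moreover have "finite (base k)" unfolding base_def by simp
  then have "finite (Pow (Pow (base k)) \<times> Pow (Pow (base k)))" by simp
  ultimately show ?thesis by (rule finite_subset)
qed

lemma prod_monoms:
  assumes "finite I"
  shows "(\<Prod>i\<in>I. F i) = (if \<forall>i\<in>I. F i \<noteq> 0 then monom (1::int) (\<Sum>i\<in>I. a i) else 0)
         \<or> \<not> (\<forall>i\<in>I. F i = 0 \<or> F i = monom 1 (a i))"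
  using assms
proof (induction I rule: finite_induct)
  case empty then show ?case by (simp add: monom_0 one_pCons)
next
  case (insert x I)
  show ?case
  proof (cases "\<forall>i\<in>insert x I. F i = 0 \<or> F i = monom 1 (a i)")
    case True
    then have IH: "(\<Prod>i\<in>I. F i) = (if \<forall>i\<in>I. F i \<noteq> 0 then monom (1::int) (\<Sum>i\<in>I. a i) else 0)"
      using insert by auto
    show ?thesis using True insert(1,2) by (auto simp: IH mult_monom)
  qed simp
qed


lemma coeff_of_int_mult: "coeff (of_int c * q) n = c * coeff (q :: int poly) n"
  by (simp add: of_int_poly)

theorem lemma3p9:
  fixes k s1 s2 :: nat
  assumes "k \<ge> 1" and "s1 + s2 \<le> k"
  shows "gram_det k s1 s2 \<noteq> 0 \<and> lead_coeff (gram_det k s1 s2) = 1"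
proof -
  define J where "J = Jset k s1 s2"
  define M where "M = gram_entry s1 s2"
  define f where "f D = card (fst D - snd D)" for D :: "vtx set set \<times> vtx set set"
  define l where "l D E = lmid (diag D) (diag E)" for D E :: "vtx set set \<times> vtx set set"
  define N where "N = (\<Sum>D\<in>J. f D)"
  have finJ: "finite J" unfolding J_def by (rule finite_Jset)
  have diagM: "M D D = monom 1 (f D)" if "D \<in> J" for D
  proof -
    obtain p t where D: "D = (p, t)" by (cases D)
    have j: "(p, t) \<in> Jset k s1 s2" using that D J_def by simp
    note jp = Jset_props[OF j]
    show ?thesis unfolding M_def gram_entry_def D f_def using diag_facts[OF jp(1,2)] jp(3) by simp
  qed
  have offM: "M D E = monom 1 (l D E) \<and> l D E \<le> f D \<and> l D E \<le> f E \<and> (l D E = f D \<and> l D E = f E \<longrightarrow> D = E)"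
    if "D \<in> J" "E \<in> J" "M D E \<noteq> 0" for D E
  proof -
    obtain p1 t1 where D: "D = (p1, t1)" by (cases D)
    obtain p2 t2 where E: "E = (p2, t2)" by (cases E)
    have j1: "(p1, t1) \<in> Jset k s1 s2" using that D J_def by simp
    have j2: "(p2, t2) \<in> Jset k s1 s2" using that E J_def by simp
    note a = Jset_props[OF j1] and b = Jset_props[OF j2]
    have pr: "prop_num (diag_prod (diag D) (diag E)) = 2 * s1 + s2"
      using that(3) unfolding M_def gram_entry_def by (auto split: if_splits)
    have Me: "M D E = monom 1 (l D E)" using pr unfolding M_def gram_entry_def l_def by simp
    note pf = pair_facts[OF a(1) b(1) a(2) b(2)]
    show ?thesis using Me pf pr a(3) b(3) unfolding l_def f_def D E by auto
  qed
  have termcoeff: "coeff (of_int (sign p) * (\<Prod>i\<in>J. M i (p i))) n = (if p = id then (if n = N then 1 else 0) else 0)"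
    if p: "p permutes J" and n: "N \<le> n" for p n
  proof (cases "p = id")
    case True
    have "(\<Prod>i\<in>J. M i (p i)) = (\<Prod>i\<in>J. monom 1 (f i))" unfolding True by (rule prod.cong) (simp_all add: diagM)
    also have "\<dots> = monom 1 N" using prod_monoms[OF finJ, of "\<lambda>i. monom 1 (f i)" f] unfolding N_def by simp
    finally show ?thesis using True by (simp add: coeff_of_int_mult)
  next
    case False
    show ?thesis
    proof (cases "\<forall>i\<in>J. M i (p i) \<noteq> 0")
      case nz: True
      have pJ: "p i \<in> J" if "i \<in> J" for i using permutes_in_image[OF p] that by simp
      have o: "M i (p i) = monom 1 (l i (p i)) \<and> l i (p i) \<le> f i \<and> l i (p i) \<le> f (p i)
          \<and> (l i (p i) = f i \<and> l i (p i) = f (p i) \<longrightarrow> i = p i)" if "i \<in> J" for i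
        using offM[OF that pJ[OF that]] nz that by blast
      have pr: "(\<Prod>i\<in>J. M i (p i)) = monom 1 (\<Sum>i\<in>J. l i (p i))"
        using prod_monoms[OF finJ, of "\<lambda>i. M i (p i)" "\<lambda>i. l i (p i)"] nz o by auto
      have lt: "(\<Sum>i\<in>J. l i (p i)) < N"
      proof (rule ccontr)
        assume ge: "\<not> (\<Sum>i\<in>J. l i (p i)) < N"
        have e1: "l i (p i) = f i" if "i \<in> J" for i
        proof (rule ccontr)
          assume "l i (p i) \<noteq> f i"
          then have "l i (p i) < f i" using o[OF that] by simp
          then have "(\<Sum>i\<in>J. l i (p i)) < (\<Sum>i\<in>J. f i)"
            using sum_strict_mono_ex1[OF finJ, of "\<lambda>i. l i (p i)" f] o that by blast
          then show False using ge unfolding N_def by simp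
        qed
        have Nf: "(\<Sum>i\<in>J. f (p i)) = N" unfolding N_def using sum.permute[OF p, of f] by (simp add: comp_def)
        have e2: "l i (p i) = f (p i)" if "i \<in> J" for i
        proof (rule ccontr)
          assume "l i (p i) \<noteq> f (p i)"
          then have "l i (p i) < f (p i)" using o[OF that] by simp
          then have "(\<Sum>i\<in>J. l i (p i)) < (\<Sum>i\<in>J. f (p i))"
            using sum_strict_mono_ex1[OF finJ, of "\<lambda>i. l i (p i)" "\<lambda>i. f (p i)"] o that by blast
          then show False using ge Nf by simp
        qed
        have "p x = x" for x
        proof (cases "x \<in> J")
          case True then show ?thesis using o[OF True] e1[OF True] e2[OF True] by simp
        next
          case False then show ?thesis using permutes_not_in[OF p] by simp
        qed
        then have "p = id" by (simp add: fun_eq_iff)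
        then show False using \<open>p \<noteq> id\<close> by simp
      qed
      show ?thesis using False pr lt n by (simp add: coeff_of_int_mult)
    next
      case z: False
      then have "(\<Prod>i\<in>J. M i (p i)) = 0" using finJ by (simp add: prod_zero_iff)
      then show ?thesis using False by simp
    qed
  qed
  have cdet: "coeff (gram_det k s1 s2) n = (if n = N then 1 else 0)" if n: "N \<le> n" for n
  proof -
    have "coeff (gram_det k s1 s2) n = (\<Sum>p\<in>{p. p permutes J}. coeff (of_int (sign p) * (\<Prod>i\<in>J. M i (p i))) n)"
      unfolding gram_det_def det_on_def coeff_sum J_def M_def ..
    also have "\<dots> = (\<Sum>p\<in>{p. p permutes J}. (if p = id then (if n = N then 1 else 0) else 0))"
      by (rule sum.cong) (simp_all add: termcoeff n)
    also have "\<dots> = (if n = N then 1 else 0)"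
      using finite_permutations[OF finJ] by (simp add: sum.delta' permutes_id)
    finally show ?thesis .
  qed
  have c1: "coeff (gram_det k s1 s2) N = 1" using cdet by simp
  have "degree (gram_det k s1 s2) \<le> N" by (rule degree_le) (use cdet in auto)
  moreover have "N \<le> degree (gram_det k s1 s2)" by (rule le_degree) (simp add: c1)
  ultimately have "degree (gram_det k s1 s2) = N" by simp
  then show ?thesis using c1 by auto
qed

end
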